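(* Let $\kappa$ be a regular uncountable cardinal and let $\mu,\lambda,\chi,\theta\le\kappa$ be cardinals satisfying $\lambda^{<\chi}<\kappa\le 2^\lambda$ and $\lambda^{<\chi}\le\theta^{<\chi}=\theta$. Then for every partition $p:[\kappa]^2\to\mu$, $\mathrm{pr}_1(\kappa,\kappa,\theta,\chi)_p$ holds if and only if $\mathrm{pr}_0(\kappa,\kappa,\theta,\chi)_p$ holds.
   Context: $[\kappa]^2$ denotes the set of pairs $(\alpha,\beta)$ with $\alpha<\beta<\kappa$; a partition is any function $p:[\kappa]^2\to\mu$. For an ordinal $\sigma$, $[\kappa]^\sigma$ is the set of subsets of $\kappa$ of order type $\sigma$, and for $a\in[\kappa]^\sigma$ and $i<\sigma$, $a(i)$ is the $i$-th element of $a$ in increasing order. For sets of ordinals $a,b$, $a<b$ means $\alpha<\beta$ for all $\alpha\in a,\beta\in b$. Given a partition $p:[\kappa]^2\to\mu$, a coloring $c:[\kappa]^2\to\theta$ witnesses (i) $\mathrm{pr}_1(\kappa,\kappa,\theta,\chi)_p$ iff for every ordinal $\sigma<\chi$, every pairwise disjoint family $\mathcal A\subseteq[\kappa]^\sigma$ with $|\mathcal A|=\kappa$, and every function $\tau:\mu\to\theta$, there are $a,b\in\mathcal A$ with $a<b$ such that $c(\alpha,\beta)=\tau(p(\alpha,\beta))$ for all $\alpha\in a,\beta\in b$; (ii) $\mathrm{pr}_0(\kappa,\kappa,\theta,\chi)_p$ iff for every ordinal $\sigma<\chi$, every pairwise disjoint family $\mathcal A\subseteq[\kappa]^\sigma$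 with $|\mathcal A|=\kappa$, and every matrix $(\tau_{i,j})_{i,j<\sigma}$ of functions from $\mu$ to $\theta$, there are $a,b\in\mathcal A$ with $a<b$ such that $c(a(i),b(j))=\tau_{i,j}(p(a(i),b(j)))$ for all $i,j<\sigma$. The principles $\mathrm{pr}_i(\kappa,\kappa,\theta,\chi)_p$ assert that such a coloring exists. *)

theory Defs
  imports Main "HOL-Library.Countable_Set" "HOL-Library.FuncSet"
begin

text \<open>The cardinal kappa is represented by a cardinal order r (an initial
well-order) on Field r; the ordinals below kappa are the elements of Field r, an ordinal
sigma is a well-order s, and ordinal comparison is ordLess / ordIso.  Other cardinals are
represented either by sets (mu = card_of M, lambda = card_of L, theta = card_of T) or, for chi
which also serves as a bound on ordinals, by a cardinal order ch.\<close>

definition pairs :: "'k rel \<Rightarrow> ('k \<times> 'k) set" where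
  "pairs r = {(\<alpha>, \<beta>). (\<alpha>, \<beta>) \<in> r \<and> \<alpha> \<noteq> \<beta>}"

definition set_less :: "'k rel \<Rightarrow> 'k set \<Rightarrow> 'k set \<Rightarrow> bool" where
  "set_less r a b \<longleftrightarrow> (\<forall>\<alpha>\<in>a. \<forall>\<beta>\<in>b. (\<alpha>, \<beta>) \<in> r \<and> \<alpha> \<noteq> \<beta>)"

definition of_type :: "'k rel \<Rightarrow> 'k set \<Rightarrow> 's rel \<Rightarrow> bool" where
  "of_type r a s \<longleftrightarrow> a \<subseteq> Field r \<and> (Restr r a, s) \<in> ordIso"

definition good_family :: "'k rel \<Rightarrow> 's rel \<Rightarrow> 'k set set \<Rightarrow> bool" where
  "good_family r s \<A> \<longleftrightarrow>
     (\<forall>a\<in>\<A>. of_type r a s) \<and> (\<forall>a\<in>\<A>. \<forall>b\<in>\<A>. a \<noteq> b \<longrightarrow> a \<inter> b = {}) \<and>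
     (card_of \<A>, r) \<in> ordIso"

text \<open>c witnesses pr_1(kappa,kappa,theta,chi)_p.  Ordinals sigma < chi are well-orders s
(on the type of kappa, which realises all ordinals below kappa >= chi) with s <o ch.\<close>
definition pr1_witness ::
  "'k rel \<Rightarrow> 't set \<Rightarrow> 'c rel \<Rightarrow> 'm set \<Rightarrow> ('k \<Rightarrow> 'k \<Rightarrow> 'm) \<Rightarrow> ('k \<Rightarrow> 'k \<Rightarrow> 't) \<Rightarrow> bool" where
  "pr1_witness r T ch M p c \<longleftrightarrow>
     (\<forall>s :: 'k rel. Well_order s \<and> (s, ch) \<in> ordLess \<longrightarrow>
       (\<forall>\<A>. good_family r s \<A> \<longrightarrow>
         (\<forall>\<tau> \<in> M \<rightarrow> T. \<exists>a\<in>\<A>. \<exists>b\<in>\<A>. set_less r a b \<and>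
             (\<forall>\<alpha>\<in>a. \<forall>\<beta>\<in>b. c \<alpha> \<beta> = \<tau> (p \<alpha> \<beta>)))))"

text \<open>c witnesses pr_0(kappa,kappa,theta,chi)_p.  The i-th element a(i) of a is f i, where
f is the (unique) order isomorphism from sigma onto a.\<close>
definition pr0_witness ::
  "'k rel \<Rightarrow> 't set \<Rightarrow> 'c rel \<Rightarrow> 'm set \<Rightarrow> ('k \<Rightarrow> 'k \<Rightarrow> 'm) \<Rightarrow> ('k \<Rightarrow> 'k \<Rightarrow> 't) \<Rightarrow> bool" where
  "pr0_witness r T ch M p c \<longleftrightarrow>
     (\<forall>s :: 'k rel. Well_order s \<and> (s, ch) \<in> ordLess \<longrightarrow>
       (\<forall>\<A>. good_family r s \<A> \<longrightarrow>
         (\<forall>\<tau> :: 'k \<Rightarrow> 'k \<Rightarrow> 'm \<Rightarrow> 't. (\<forall>i\<in>Field s. \<forall>j\<in>Field s. \<tau> i j \<in> M \<rightarrow> T) \<longrightarrow>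
           (\<exists>a\<in>\<A>. \<exists>b\<in>\<A>. set_less r a b \<and>
             (\<exists>f g. iso s (Restr r a) f \<and> iso s (Restr r b) g \<and>
               (\<forall>i\<in>Field s. \<forall>j\<in>Field s. c (f i) (g j) = \<tau> i j (p (f i) (g j))))))))"

definition pr1 ::
  "'k rel \<Rightarrow> 't set \<Rightarrow> 'c rel \<Rightarrow> 'm set \<Rightarrow> ('k \<Rightarrow> 'k \<Rightarrow> 'm) \<Rightarrow> bool" where
  "pr1 r T ch M p \<longleftrightarrow> (\<exists>c. (\<forall>(\<alpha>, \<beta>)\<in>pairs r. c \<alpha> \<beta> \<in> T) \<and> pr1_witness r T ch M p c)"

definition pr0 ::
  "'k rel \<Rightarrow> 't set \<Rightarrow> 'c rel \<Rightarrow> 'm set \<Rightarrow> ('k \<Rightarrow> 'k \<Rightarrow> 'm) \<Rightarrow> bool" where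
  "pr0 r T ch M p \<longleftrightarrow> (\<exists>c. (\<forall>(\<alpha>, \<beta>)\<in>pairs r. c \<alpha> \<beta> \<in> T) \<and> pr0_witness r T ch M p c)"

text \<open>A set witnessing the cardinal lambda^{<chi} = sum over ordinals nu < chi of lambda^|nu|
(the ordinals nu < chi being the initial segments underS ch x of chi).  For infinite lambda
this coincides with sup of lambda^nu over nu < chi.\<close>
definition lt_exp_set :: "'l set \<Rightarrow> 'c rel \<Rightarrow> ('c \<times> ('c \<Rightarrow> 'l)) set" where
  "lt_exp_set L ch = (SIGMA x : Field ch. Func (Order_Relation.underS ch x) L)"

end

theory Submission
  imports Defs
begin

context
  includes cardinal_syntax
begin

definition small :: "'c rel \<Rightarrow> 'a set \<Rightarrow> bool" where
  "small ch Z \<longleftrightarrow> finite Z \<or> |Z| <o ch"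

definition SS :: "'c rel \<Rightarrow> 'a set \<Rightarrow> 'a set set" where
  "SS ch A = {Z. Z \<subseteq> A \<and> small ch Z}"

lemma small_subset: "small ch Z \<Longrightarrow> Y \<subseteq> Z \<Longrightarrow> small ch Y"
  unfolding small_def using finite_subset[of Y Z] ordLeq_ordLess_trans[OF card_of_mono1[of Y Z], of ch] by blast

lemma small_image: "small ch Z \<Longrightarrow> small ch (f ` Z)"
  unfolding small_def using ordLeq_ordLess_trans[OF card_of_image[of f Z], of ch] by blast

lemma finite_small_ordLess:
  assumes "Card_order ch" "\<not> finite (Field ch)" "finite A"
  shows "|A| <o ch"
proof -
  have "Well_order ch" using assms(1) card_order_on_well_order_on by blast
  thus ?thesis using assms finite_ordLess_infinite[of "|A|" ch]
    by (simp add: Field_card_of card_of_well_order_on)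
qed

lemma small_infinite_ch:
  assumes "Card_order ch" "|Z| <o ch" "\<not> finite Z"
  shows "\<not> finite (Field ch)"
proof
  assume "finite (Field ch)"
  have "|Z| \<le>o |Field ch|" using ordLeq_ordIso_trans[OF ordLess_imp_ordLeq[OF assms(2)]
    ordIso_symmetric[OF card_of_Field_ordIso[OF assms(1)]]] .
  thus False using card_of_ordLeq_finite \<open>finite (Field ch)\<close> assms(3) by blast
qed

lemma small_Times:
  assumes ch: "Card_order ch" and X: "small ch X" and Y: "small ch Y"
  shows "small ch (X \<times> Y)"
proof (cases "finite X \<and> finite Y")
  case True thus ?thesis by (simp add: small_def)
next
  case False
  have inf: "\<not> finite (Field ch)"
  proof (cases "finite X")
    case True
    hence "\<not> finite Y" using False by blast
    thus ?thesis using Y ch small_infinite_ch[of ch Y] unfolding small_def by blast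
  next
    case False
    thus ?thesis using X ch small_infinite_ch[of ch X] unfolding small_def by blast
  qed
  have lX: "|X| <o ch" and lY: "|Y| <o ch" using X Y inf ch finite_small_ordLess unfolding small_def by blast+
  have "|X| \<le>o |Y| \<or> |Y| \<le>o |X|" using ordLeq_total[OF card_of_Well_order card_of_Well_order] .
  thus ?thesis
  proof
    assume XY: "|X| \<le>o |Y|"
    have "\<not> finite Y" using False card_of_ordLeq_finite[OF XY] by blast
    hence "|X \<times> Y| \<le>o |Y|"
      using card_of_Times_ordLeq_infinite_Field[of "|Y|" X Y] XY ordLeq_reflexive[OF card_of_Well_order[of Y]]
      by (simp add: Field_card_of card_of_card_order_on)
    thus ?thesis using ordLeq_ordLess_trans[OF _ lY] unfolding small_def by blast
  next
    assume XY: "|Y| \<le>o |X|"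
    have "\<not> finite X" using False card_of_ordLeq_finite[OF XY] by blast
    hence "|X \<times> Y| \<le>o |X|"
      using card_of_Times_ordLeq_infinite_Field[of "|X|" X Y] XY ordLeq_reflexive[OF card_of_Well_order[of X]]
      by (simp add: Field_card_of card_of_card_order_on)
    thus ?thesis using ordLeq_ordLess_trans[OF _ lX] unfolding small_def by blast
  qed
qed

lemma finite_le_infinite: "finite A \<Longrightarrow> \<not> finite B \<Longrightarrow> |A| \<le>o |B|"
  using finite_ordLess_infinite[of "|A|" "|B|"] ordLess_imp_ordLeq
  by (simp add: Field_card_of card_of_well_order_on)

lemma lists_len_le:
  assumes B: "\<not> finite B"
  shows "|{xs. set xs \<subseteq> B \<and> length xs = n}| \<le>o |B|"
proof (induction n)
  case 0
  have "{xs. set xs \<subseteq> B \<and> length xs = 0} = {[]}" by auto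
  thus ?case using finite_le_infinite[of "{[]}" B] B by simp
next
  case (Suc n)
  have "{xs. set xs \<subseteq> B \<and> length xs = Suc n} \<subseteq> (\<lambda>(x,xs). x#xs) ` (B \<times> {xs. set xs \<subseteq> B \<and> length xs = n})"
  proof
    fix xs assume "xs \<in> {xs. set xs \<subseteq> B \<and> length xs = Suc n}"
    then obtain y ys where "xs = y # ys" "y \<in> B" "set ys \<subseteq> B" "length ys = n"
      by (cases xs) auto
    thus "xs \<in> (\<lambda>(x,xs). x#xs) ` (B \<times> {xs. set xs \<subseteq> B \<and> length xs = n})" by force
  qed
  hence "|{xs. set xs \<subseteq> B \<and> length xs = Suc n}| \<le>o |B \<times> {xs. set xs \<subseteq> B \<and> length xs = n}|"
    by (rule ordLeq_transitive[OF card_of_mono1 card_of_image])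
  moreover have "|B \<times> {xs. set xs \<subseteq> B \<and> length xs = n}| \<le>o |B|"
    using card_of_Times_ordLeq_infinite_Field[of "|B|" B] Suc B ordLeq_reflexive[OF card_of_Well_order[of B]]
    by (simp add: Field_card_of card_of_card_order_on)
  ultimately show ?case by (rule ordLeq_transitive)
qed

lemma Fin_le:
  assumes B: "\<not> finite B"
  shows "|{Z. Z \<subseteq> B \<and> finite Z}| \<le>o |B|"
proof -
  have "{Z. Z \<subseteq> B \<and> finite Z} \<subseteq> set ` (\<Union>n. {xs. set xs \<subseteq> B \<and> length xs = n})"
  proof
    fix Z assume "Z \<in> {Z. Z \<subseteq> B \<and> finite Z}"
    then obtain xs where "set xs = Z" "Z \<subseteq> B" using finite_list by blast
    thus "Z \<in> set ` (\<Union>n. {xs. set xs \<subseteq> B \<and> length xs = n})" by blast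
  qed
  hence "|{Z. Z \<subseteq> B \<and> finite Z}| \<le>o |\<Union>n. {xs. set xs \<subseteq> B \<and> length xs = n}|"
    by (rule ordLeq_transitive[OF card_of_mono1 card_of_image])
  moreover have "|\<Union>n. {xs. set xs \<subseteq> B \<and> length xs = n}| \<le>o |B|"
    by (rule card_of_UNION_ordLeq_infinite[OF B infinite_iff_card_of_nat[THEN iffD1, OF B]]) (simp add: lists_len_le[OF B])
  ultimately show ?thesis by (rule ordLeq_transitive)
qed

lemma lt_exp_mono:
  assumes "inj_on g A" "g ` A \<subseteq> B"
  shows "|lt_exp_set A ch| \<le>o |lt_exp_set B ch|"
proof -
  define G where "G = (\<lambda>(y, f). (y, \<lambda>u. if u \<in> underS ch y then g (f u) else undefined))"
  have "inj_on G (lt_exp_set A ch)"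
  proof (rule inj_onI)
    fix a b assume a: "a \<in> lt_exp_set A ch" and b: "b \<in> lt_exp_set A ch" and e: "G a = G b"
    obtain y f where ay: "a = (y, f)" by force
    obtain z k where bz: "b = (z, k)" by force
    have yz: "y = z" using e unfolding G_def ay bz by auto
    have "f = k"
    proof
      fix u show "f u = k u"
      proof (cases "u \<in> underS ch y")
        case True
        hence "g (f u) = g (k u)" using e unfolding G_def ay bz yz by (auto dest: fun_cong[of _ _ u])
        moreover have "f u \<in> A" "k u \<in> A" using a b True unfolding ay bz yz lt_exp_set_def Func_def by auto
        ultimately show ?thesis using assms(1) by (auto dest: inj_onD)
      next
        case False thus ?thesis using a b unfolding ay bz yz lt_exp_set_def Func_def by auto
      qed
    qed
    thus "a = b" using ay bz yz by simp
  qed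
  moreover have "G ` lt_exp_set A ch \<subseteq> lt_exp_set B ch"
    using assms(2) unfolding G_def lt_exp_set_def Func_def by auto
  ultimately show ?thesis using card_of_ordLeq by blast
qed

lemma le_lt_exp:
  fixes B :: "'b set" and ch :: "'c rel"
  assumes "x \<in> Field ch" "underS ch x \<noteq> {}"
  shows "|B| \<le>o |lt_exp_set B ch|"
proof -
  define G where "G = (\<lambda>b::'b. (x, \<lambda>u. if u \<in> underS ch x then b else undefined))"
  obtain u0 where u0: "u0 \<in> underS ch x" using assms by blast
  have "inj_on G B" unfolding G_def inj_on_def using u0 by (auto dest: fun_cong[of _ _ u0])
  moreover have "G ` B \<subseteq> lt_exp_set B ch" using assms unfolding G_def lt_exp_set_def Func_def by auto
  ultimately show ?thesis using card_of_ordLeq by blast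
qed

lemma small_surj:
  assumes ch: "Card_order ch" and Z: "|Z| <o ch" "Z \<noteq> {}"
  shows "\<exists>y f. (y, f) \<in> lt_exp_set Z ch \<and> f ` underS ch y = Z"
proof -
  have wo: "Well_order ch" using ch card_order_on_well_order_on by blast
  obtain y where y: "y \<in> Field ch" "|Z| =o Restr ch (underS ch y)"
    using ordLess_iff_ordIso_Restr[OF wo card_of_Well_order] Z by blast
  then obtain f where "iso (Restr ch (underS ch y)) |Z| f"
    using ordIso_symmetric unfolding ordIso_def by blast
  hence bij: "bij_betw f (Field (Restr ch (underS ch y))) Z" unfolding iso_def by (simp add: Field_card_of)
  have "Field (Restr ch (underS ch y)) = underS ch y"
    using Field_Restr_ofilter[OF wo wo_rel.underS_ofilter[of ch y]] wo by (simp add: wo_rel_def)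
  hence bij': "bij_betw f (underS ch y) Z" using bij by simp
  define f' where "f' = (\<lambda>u. if u \<in> underS ch y then f u else undefined)"
  have "(y, f') \<in> lt_exp_set Z ch" using y bij' unfolding lt_exp_set_def Func_def f'_def bij_betw_def by auto
  moreover have "f' ` underS ch y = Z" using bij' unfolding f'_def bij_betw_def by auto
  ultimately show ?thesis by blast
qed

lemma SS_bound:
  assumes ch: "Card_order ch" and x: "x \<in> Field ch" "underS ch x \<noteq> {}"
    and g: "inj_on g A" "g ` A \<subseteq> B" and B: "\<not> finite B"
  shows "|SS ch A| \<le>o |lt_exp_set B ch|"
proof -
  define F1 where "F1 = {Z. Z \<subseteq> A \<and> finite Z}"
  define F2 where "F2 = (\<lambda>(y, f). f ` underS ch y) ` lt_exp_set A ch"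
  have sub: "SS ch A \<subseteq> F1 \<union> F2"
  proof
    fix Z assume "Z \<in> SS ch A"
    hence ZA: "Z \<subseteq> A" and "finite Z \<or> |Z| <o ch" unfolding SS_def small_def by auto
    show "Z \<in> F1 \<union> F2"
    proof (cases "finite Z")
      case True thus ?thesis using ZA unfolding F1_def by auto
    next
      case False
      hence "|Z| <o ch" "Z \<noteq> {}" using \<open>finite Z \<or> |Z| <o ch\<close> by auto
      then obtain y f where "(y, f) \<in> lt_exp_set Z ch" "f ` underS ch y = Z"
        using small_surj[OF ch] by blast
      moreover hence "(y, f) \<in> lt_exp_set A ch" using ZA unfolding lt_exp_set_def Func_def by auto
      ultimately show ?thesis unfolding F2_def by force
    qed
  qed
  have LB: "|B| \<le>o |lt_exp_set B ch|" using le_lt_exp[OF x] by blast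
  have inf: "\<not> finite (lt_exp_set B ch)" using B LB card_of_ordLeq_finite by blast
  have "inj_on (image g) F1" using g(1) inj_on_image_Pow[of g A] unfolding F1_def inj_on_def Pow_def by blast
  moreover have "image g ` F1 \<subseteq> {Z. Z \<subseteq> B \<and> finite Z}" using g(2) unfolding F1_def by auto
  ultimately have "|F1| \<le>o |{Z. Z \<subseteq> B \<and> finite Z}|" using card_of_ordLeq by blast
  hence 1: "|F1| \<le>o |lt_exp_set B ch|" using ordLeq_transitive[OF ordLeq_transitive[OF _ Fin_le[OF B]] LB] by blast
  have 2: "|F2| \<le>o |lt_exp_set B ch|"
    unfolding F2_def by (rule ordLeq_transitive[OF card_of_image lt_exp_mono[OF g]])
  have "|F1 \<union> F2| \<le>o |lt_exp_set B ch|"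
    using card_of_Un_ordLeq_infinite_Field[of "|lt_exp_set B ch|"] 1 2 inf
    by (simp add: Field_card_of card_of_card_order_on)
  thus ?thesis using ordLeq_transitive[OF card_of_mono1[OF sub]] by blast
qed


lemma ch_le_L:
  fixes L :: "'l set" and ch :: "'c rel" and r :: "'k rel"
  assumes chi_card: "Card_order ch" and Linf: "\<not> finite L"
    and lt: "|lt_exp_set L ch| <o r" and pw: "r \<le>o |Pow L|"
  shows "ch \<le>o |L|"
proof (rule ccontr)
  assume "\<not> ch \<le>o |L|"
  have wo: "Well_order ch" using chi_card card_order_on_well_order_on by blast
  have "|L| <o ch" using not_ordLeq_iff_ordLess[OF card_of_Well_order wo] \<open>\<not> ch \<le>o |L|\<close> by blast
  moreover have "L \<noteq> {}" using Linf by auto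
  ultimately obtain y f where yf: "(y, f) \<in> lt_exp_set L ch" "f ` underS ch y = L"
    using small_surj[OF chi_card] by blast
  obtain l0 where l0: "l0 \<in> L" using \<open>L \<noteq> {}\<close> by blast
  have "L - {l0} \<noteq> {}"
  proof
    assume "L - {l0} = {}" hence "L \<subseteq> {l0}" by blast
    thus False using Linf finite_subset[of L "{l0}"] by simp
  qed
  then obtain l1 where l1: "l1 \<in> L" "l1 \<noteq> l0" by blast
  define G where "G = (\<lambda>Z. (y, \<lambda>u. if u \<in> underS ch y then (if f u \<in> Z then l1 else l0) else undefined))"
  have "inj_on G (Pow L)"
  proof (rule inj_onI)
    fix Z1 Z2 assume Z1: "Z1 \<in> Pow L" and Z2: "Z2 \<in> Pow L" and e: "G Z1 = G Z2"
    have eq: "\<And>u. u \<in> underS ch y \<Longrightarrow> (f u \<in> Z1) = (f u \<in> Z2)"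
    proof -
      fix u assume u: "u \<in> underS ch y"
      have "(if f u \<in> Z1 then l1 else l0) = (if f u \<in> Z2 then l1 else l0)"
        using fun_cong[OF arg_cong[OF e, of snd], of u] u unfolding G_def by simp
      thus "(f u \<in> Z1) = (f u \<in> Z2)" using l1 by (auto split: if_splits)
    qed
    show "Z1 = Z2"
    proof (rule set_eqI)
      fix l show "(l \<in> Z1) = (l \<in> Z2)"
      proof (cases "l \<in> L")
        case True
        then obtain u where "u \<in> underS ch y" "l = f u" using yf(2) by blast
        thus ?thesis using eq by blast
      next
        case False thus ?thesis using Z1 Z2 by auto
      qed
    qed
  qed
  moreover have "G ` Pow L \<subseteq> lt_exp_set L ch"
    using yf(1) l0 l1 unfolding G_def lt_exp_set_def Func_def by auto
  ultimately have "|Pow L| \<le>o |lt_exp_set L ch|" using card_of_ordLeq by blast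
  hence "|Pow L| <o r" using ordLeq_ordLess_trans[OF _ lt] by blast
  thus False using not_ordLess_ordLeq[of "|Pow L|" r] pw by blast
qed

lemma Field_Restr_sub: "Card_order r \<Longrightarrow> a \<subseteq> Field r \<Longrightarrow> Field (Restr r a) = a"
  using Refl_Field_Restr2[of r a] card_order_on_well_order_on[of "Field r" r]
  unfolding order_on_defs by blast

lemma pr0_imp_pr1:
  assumes kappa_card: "Card_order r" and pr0: "pr0 r T ch M p"
  shows "pr1 r T ch M p"
proof -
  obtain c where crange: "\<forall>(\<alpha>, \<beta>)\<in>pairs r. c \<alpha> \<beta> \<in> T" and cw: "pr0_witness r T ch M p c"
    using pr0 unfolding pr0_def by blast
  have "pr1_witness r T ch M p c"
    unfolding pr1_witness_def
  proof (intro allI impI ballI)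
    fix s :: "'a rel" and \<A> \<tau>
    assume s: "Well_order s \<and> s <o ch" and good: "good_family r s \<A>" and \<tau>: "\<tau> \<in> M \<rightarrow> T"
    obtain a b f g where ab: "a \<in> \<A>" "b \<in> \<A>" "set_less r a b" "iso s (Restr r a) f" "iso s (Restr r b) g"
      and eq: "\<forall>i\<in>Field s. \<forall>j\<in>Field s. c (f i) (g j) = \<tau> (p (f i) (g j))"
      using cw[unfolded pr0_witness_def, rule_format, OF s good, of "\<lambda>i j. \<tau>"] \<tau> by blast
    have "a \<subseteq> Field r" "b \<subseteq> Field r" using ab good unfolding good_family_def of_type_def by auto
    hence "f ` Field s = a" "g ` Field s = b" using ab(4,5) Field_Restr_sub[OF kappa_card]
      unfolding iso_def bij_betw_def by auto
    hence "\<forall>\<alpha>\<in>a. \<forall>\<beta>\<in>b. c \<alpha> \<beta> = \<tau> (p \<alpha> \<beta>)" using eq by blast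
    thus "\<exists>a\<in>\<A>. \<exists>b\<in>\<A>. set_less r a b \<and> (\<forall>\<alpha>\<in>a. \<forall>\<beta>\<in>b. c \<alpha> \<beta> = \<tau> (p \<alpha> \<beta>))"
      using ab by blast
  qed
  thus ?thesis using crange unfolding pr1_def by blast
qed


lemma pr1_imp_pr0:
  fixes r :: "'k rel" and M :: "'m set" and L :: "'l set" and ch :: "'c rel" and T :: "'t set"
    and p :: "'k \<Rightarrow> 'k \<Rightarrow> 'm"
  assumes kappa_card: "Card_order r"
    and kappa_regular: "regularCard r"
    and kappa_uncountable: "\<not> countable (Field r)"
    and chi_card: "Card_order ch"
    and lam_chi_lt_kappa: "(card_of (lt_exp_set L ch), r) \<in> ordLess"
    and kappa_le_pow: "(r, card_of (Pow L)) \<in> ordLeq"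
    and lam_chi_le_theta: "(card_of (lt_exp_set L ch), card_of T) \<in> ordLeq"
    and theta_chi_eq: "(card_of (lt_exp_set T ch), card_of T) \<in> ordIso"
    and p_partition: "\<forall>(\<alpha>, \<beta>)\<in>pairs r. p \<alpha> \<beta> \<in> M"
    and pr1: "pr1 r T ch M p"
  shows "pr0 r T ch M p"
proof -
  obtain c where crange: "\<forall>(\<alpha>, \<beta>)\<in>pairs r. c \<alpha> \<beta> \<in> T" and cw: "pr1_witness r T ch M p c"
    using pr1 unfolding pr1_def by blast
  have infr: "\<not> finite (Field r)" using kappa_uncountable countable_finite by blast
  have Fr: "|Field r| \<le>o |Pow L|"
    by (rule ordIso_ordLeq_trans[OF card_of_Field_ordIso[OF kappa_card] kappa_le_pow])
  obtain h where h: "inj_on h (Field r)" "h ` Field r \<subseteq> Pow L"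
    using card_of_ordLeq[THEN iffD2, OF Fr] by blast
  have Linf: "\<not> finite L"
  proof
    assume "finite L" hence "finite (Pow L)" by simp
    thus False using card_of_ordLeq_finite[OF Fr] infr by blast
  qed
  define P where "P = SS ch L \<times> SS ch L \<times> SS ch L \<times> T"
  define enc where "enc = (SOME e. inj_on e (SS ch P) \<and> e ` SS ch P \<subseteq> T)"
  define Dec where "Dec = (\<lambda>t \<alpha> \<beta>.
     if (\<exists>!v. v \<in> T \<and> (\<exists>D. (D, h \<alpha> \<inter> D, h \<beta> \<inter> D, v) \<in> inv_into (SS ch P) enc t))
     then (THE v. v \<in> T \<and> (\<exists>D. (D, h \<alpha> \<inter> D, h \<beta> \<inter> D, v) \<in> inv_into (SS ch P) enc t))
     else t)"
  define d where "d = (\<lambda>\<alpha> \<beta>. Dec (c \<alpha> \<beta>) \<alpha> \<beta>)"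
  have drange: "\<forall>(\<alpha>, \<beta>)\<in>pairs r. d \<alpha> \<beta> \<in> T"
  proof (intro ballI, clarify)
    fix \<alpha> \<beta> assume ab: "(\<alpha>, \<beta>) \<in> pairs r"
    show "d \<alpha> \<beta> \<in> T"
    proof (cases "\<exists>!v. v \<in> T \<and> (\<exists>D. (D, h \<alpha> \<inter> D, h \<beta> \<inter> D, v) \<in> inv_into (SS ch P) enc (c \<alpha> \<beta>))")
      case True
      thus ?thesis unfolding d_def Dec_def using theI'[OF True] by simp
    next
      case False
      thus ?thesis unfolding d_def Dec_def using crange ab by auto
    qed
  qed
  have "pr0_witness r T ch M p d"
    unfolding pr0_witness_def
  proof (intro allI impI)
    fix s :: "'k rel" and \<A> and \<tau> :: "'k \<Rightarrow> 'k \<Rightarrow> 'm \<Rightarrow> 't"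
    assume s: "Well_order s \<and> s <o ch" and good: "good_family r s \<A>"
      and \<tau>: "\<forall>i\<in>Field s. \<forall>j\<in>Field s. \<tau> i j \<in> M \<rightarrow> T"
    have wos: "Well_order s" and sch: "s <o ch" using s by auto
    have wor: "Well_order r" using kappa_card card_order_on_well_order_on by blast
    have woch: "Well_order ch" using chi_card card_order_on_well_order_on by blast
    have ofty: "\<And>a. a \<in> \<A> \<Longrightarrow> of_type r a s" using good unfolding good_family_def by blast
    have asub: "\<And>a. a \<in> \<A> \<Longrightarrow> a \<subseteq> Field r" using ofty unfolding of_type_def by blast
    have exf: "\<And>a. a \<in> \<A> \<Longrightarrow> \<exists>f. iso s (Restr r a) f"
    proof -
      fix a assume "a \<in> \<A>"
      hence "Restr r a =o s" using ofty unfolding of_type_def by blast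
      hence "s =o Restr r a" by (rule ordIso_symmetric)
      thus "\<exists>f. iso s (Restr r a) f" unfolding ordIso_def by blast
    qed
    define fa where "fa = (\<lambda>a. SOME f. iso s (Restr r a) f)"
    have fa_iso: "\<And>a. a \<in> \<A> \<Longrightarrow> iso s (Restr r a) (fa a)"
      unfolding fa_def using exf someI_ex by metis
    have fa_bij: "\<And>a. a \<in> \<A> \<Longrightarrow> bij_betw (fa a) (Field s) a"
    proof -
      fix a assume a: "a \<in> \<A>"
      have "bij_betw (fa a) (Field s) (Field (Restr r a))" using fa_iso[OF a] unfolding iso_def by blast
      thus "bij_betw (fa a) (Field s) a" using Field_Restr_sub[OF kappa_card asub[OF a]] by simp
    qed
    have Ar: "|\<A>| =o r" using good unfolding good_family_def by blast
    have Fs_ne: "Field s \<noteq> {}"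
    proof
      assume e: "Field s = {}"
      have "\<A> \<subseteq> {{}}"
      proof
        fix a assume a: "a \<in> \<A>"
        have "a = fa a ` Field s" using fa_bij[OF a] unfolding bij_betw_def by simp
        thus "a \<in> {{}}" using e by simp
      qed
      hence "finite \<A>" using finite_subset by blast
      hence "finite (Field r)"
        using card_of_ordIso_finite_Field[OF kappa_card ordIso_symmetric[OF Ar]] by simp
      thus False using infr by blast
    qed
    obtain y where y: "y \<in> Field ch" "s =o Restr ch (underS ch y)"
      using ordLess_iff_ordIso_Restr[OF woch wos] sch by blast
    have uy: "underS ch y \<noteq> {}"
    proof -
      obtain g where "iso s (Restr ch (underS ch y)) g" using y(2) unfolding ordIso_def by blast
      hence "bij_betw g (Field s) (Field (Restr ch (underS ch y)))" unfolding iso_def by blast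
      moreover have "Field (Restr ch (underS ch y)) = underS ch y"
        using Field_Restr_ofilter[OF woch wo_rel.underS_ofilter[of ch y]] woch by (simp add: wo_rel_def)
      ultimately show ?thesis using Fs_ne unfolding bij_betw_def by auto
    qed
    have LLE: "|L| \<le>o |lt_exp_set L ch|" using le_lt_exp[OF y(1) uy] .
    have LT: "|L| \<le>o |T|" by (rule ordLeq_transitive[OF LLE lam_chi_le_theta])
    have Tinf: "\<not> finite T" using Linf card_of_ordLeq_finite[OF LT] by blast
    have chL: "ch \<le>o |L|" by (rule ch_le_L[OF chi_card Linf lam_chi_lt_kappa kappa_le_pow])
    have sFs: "|Field s| <o ch" by (rule BNF_Cardinal_Order_Relation.ordLess_Field[OF sch])
    have smallFs: "small ch (Field s)" using sFs unfolding small_def by blast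
    have FsL: "|Field s| \<le>o |L|" by (rule ordLeq_transitive[OF ordLess_imp_ordLeq[OF sFs] chL])
    define sep where "sep = (\<lambda>\<alpha> \<beta>. SOME x. (x \<in> h \<alpha>) \<noteq> (x \<in> h \<beta>))"
    have sep: "\<And>\<alpha> \<beta>. \<alpha> \<in> Field r \<Longrightarrow> \<beta> \<in> Field r \<Longrightarrow> \<alpha> \<noteq> \<beta> \<Longrightarrow>
        (sep \<alpha> \<beta> \<in> h \<alpha>) \<noteq> (sep \<alpha> \<beta> \<in> h \<beta>)"
    proof -
      fix \<alpha> \<beta> assume "\<alpha> \<in> Field r" "\<beta> \<in> Field r" "\<alpha> \<noteq> \<beta>"
      hence "h \<alpha> \<noteq> h \<beta>" using h(1) unfolding inj_on_def by blast
      hence "\<exists>x. (x \<in> h \<alpha>) \<noteq> (x \<in> h \<beta>)" by blast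
      thus "(sep \<alpha> \<beta> \<in> h \<alpha>) \<noteq> (sep \<alpha> \<beta> \<in> h \<beta>)" unfolding sep_def by (rule someI_ex)
    qed
    have sepL: "\<And>\<alpha> \<beta>. \<alpha> \<in> Field r \<Longrightarrow> \<beta> \<in> Field r \<Longrightarrow> \<alpha> \<noteq> \<beta> \<Longrightarrow> sep \<alpha> \<beta> \<in> L"
    proof -
      fix \<alpha> \<beta> assume ab: "\<alpha> \<in> Field r" "\<beta> \<in> Field r" "\<alpha> \<noteq> \<beta>"
      have "h \<alpha> \<subseteq> L" "h \<beta> \<subseteq> L" using h(2) ab by auto
      thus "sep \<alpha> \<beta> \<in> L" using sep[OF ab] by blast
    qed
    define D where "D = (\<lambda>a. (\<lambda>(\<alpha>, \<beta>). sep \<alpha> \<beta>) ` {(\<alpha>, \<beta>). \<alpha> \<in> a \<and> \<beta> \<in> a \<and> \<alpha> \<noteq> \<beta>})"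
    have smalla: "\<And>a. a \<in> \<A> \<Longrightarrow> small ch a"
    proof -
      fix a assume a: "a \<in> \<A>"
      have "a = fa a ` Field s" using fa_bij[OF a] unfolding bij_betw_def by simp
      thus "small ch a" using small_image[OF smallFs] by metis
    qed
    have smallD: "\<And>a. a \<in> \<A> \<Longrightarrow> small ch (D a)"
    proof -
      fix a assume a: "a \<in> \<A>"
      have "small ch (a \<times> a)" by (rule small_Times[OF chi_card smalla[OF a] smalla[OF a]])
      hence "small ch {(\<alpha>, \<beta>). \<alpha> \<in> a \<and> \<beta> \<in> a \<and> \<alpha> \<noteq> \<beta>}" by (rule small_subset) auto
      thus "small ch (D a)" unfolding D_def by (rule small_image)
    qed
    have DL: "\<And>a. a \<in> \<A> \<Longrightarrow> D a \<subseteq> L"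
    proof
      fix a x assume a: "a \<in> \<A>" and x: "x \<in> D a"
      then obtain \<alpha> \<beta> where ab: "\<alpha> \<in> a" "\<beta> \<in> a" "\<alpha> \<noteq> \<beta>" "x = sep \<alpha> \<beta>" using x unfolding D_def by force
      have "\<alpha> \<in> Field r" "\<beta> \<in> Field r" using ab asub[OF a] by blast+
      thus "x \<in> L" using sepL ab by blast
    qed
    have Dsep: "\<And>a \<alpha> \<beta>. a \<in> \<A> \<Longrightarrow> \<alpha> \<in> a \<Longrightarrow> \<beta> \<in> a \<Longrightarrow> \<alpha> \<noteq> \<beta> \<Longrightarrow> h \<alpha> \<inter> D a \<noteq> h \<beta> \<inter> D a"
    proof -
      fix a \<alpha> \<beta> assume a: "a \<in> \<A>" and ab: "\<alpha> \<in> a" "\<beta> \<in> a" "\<alpha> \<noteq> \<beta>"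
      have x: "sep \<alpha> \<beta> \<in> D a" unfolding D_def using ab by force
      have "(sep \<alpha> \<beta> \<in> h \<alpha>) \<noteq> (sep \<alpha> \<beta> \<in> h \<beta>)" using sep asub[OF a] ab by blast
      thus "h \<alpha> \<inter> D a \<noteq> h \<beta> \<inter> D a" using x by blast
    qed
    define Ty where "Ty = (\<lambda>a. (\<lambda>(i, x). (i, x, x \<in> h (fa a i))) ` (Field s \<times> D a))"
    define Q where "Q = Field s \<times> L \<times> (UNIV :: bool set)"
    have TyQ: "\<And>a. a \<in> \<A> \<Longrightarrow> Ty a \<in> SS ch Q"
    proof -
      fix a assume a: "a \<in> \<A>"
      have "Ty a \<subseteq> Q" unfolding Ty_def Q_def using DL[OF a] by auto
      moreover have "small ch (Ty a)" unfolding Ty_def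
        by (rule small_image[OF small_Times[OF chi_card smallFs smallD[OF a]]])
      ultimately show "Ty a \<in> SS ch Q" unfolding SS_def by blast
    qed
    have LL: "|L| \<le>o |L|" by (rule ordLeq_reflexive[OF card_of_Well_order])
    have boolL: "|UNIV :: bool set| \<le>o |L|" using finite_le_infinite[OF _ Linf, of "UNIV :: bool set"] by simp
    have LbL: "|L \<times> (UNIV :: bool set)| \<le>o |L|"
      using card_of_Times_ordLeq_infinite_Field[of "|L|" L "UNIV :: bool set"] Linf LL boolL
      by (simp add: Field_card_of card_of_card_order_on)
    have QL: "|Q| \<le>o |L|" unfolding Q_def
      using card_of_Times_ordLeq_infinite_Field[of "|L|" "Field s" "L \<times> (UNIV :: bool set)"] Linf FsL LbL
      by (simp add: Field_card_of card_of_card_order_on)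
    obtain gQ where gQ: "inj_on gQ Q" "gQ ` Q \<subseteq> L" using card_of_ordLeq[THEN iffD2, OF QL] by blast
    have SSQ: "|SS ch Q| <o r"
      by (rule ordLeq_ordLess_trans[OF SS_bound[OF chi_card y(1) uy gQ Linf] lam_chi_lt_kappa])
    have "\<exists>z \<in> Ty ` \<A>. \<not> |{a \<in> \<A>. Ty a = z}| <o r"
    proof (rule ccontr)
      assume "\<not> (\<exists>z \<in> Ty ` \<A>. \<not> |{a \<in> \<A>. Ty a = z}| <o r)"
      hence fib: "\<forall>z \<in> Ty ` \<A>. |{a \<in> \<A>. Ty a = z}| <o r" by blast
      have "Ty ` \<A> \<subseteq> SS ch Q" using TyQ by blast
      hence "|Ty ` \<A>| <o r" by (rule ordLeq_ordLess_trans[OF card_of_mono1 SSQ])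
      moreover have Cinf: "Cinfinite r" using infr kappa_card unfolding cinfinite_def by blast
      ultimately have "|\<Union>z \<in> Ty ` \<A>. {a \<in> \<A>. Ty a = z}| <o r"
        using card_of_UNION_ordLess_infinite_Field_regularCard[OF kappa_regular Cinf, of "Ty ` \<A>" "\<lambda>z. {a \<in> \<A>. Ty a = z}"] fib
        by blast
      moreover have "(\<Union>z \<in> Ty ` \<A>. {a \<in> \<A>. Ty a = z}) = \<A>" by blast
      ultimately have Alt: "|\<A>| <o r" by simp
      show False using not_ordLess_ordIso[OF Alt] Ar by blast
    qed
    then obtain z where z: "z \<in> Ty ` \<A>" "\<not> |{a \<in> \<A>. Ty a = z}| <o r" by blast
    define \<A>' where "\<A>' = {a \<in> \<A>. Ty a = z}"
    have A'sub: "\<A>' \<subseteq> \<A>" unfolding \<A>'_def by blast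
    have "|\<A>'| \<le>o r" by (rule ordLeq_ordIso_trans[OF card_of_mono1[OF A'sub] Ar])
    hence A'r: "|\<A>'| =o r" using z(2) unfolding \<A>'_def ordLeq_iff_ordLess_or_ordIso by blast
    have good': "good_family r s \<A>'" using good A'sub A'r unfolding good_family_def by blast
    obtain a0 where a0: "a0 \<in> \<A>'" using z(1) unfolding \<A>'_def by blast
    have a0A: "a0 \<in> \<A>" using a0 A'sub by blast
    define D0 where "D0 = D a0"
    define N where "N = (\<lambda>i. h (fa a0 i) \<inter> D0)"
    have projD: "\<And>a. fst ` snd ` Ty a = D a" unfolding Ty_def using Fs_ne by force
    have memTy: "\<And>a i x. i \<in> Field s \<Longrightarrow> x \<in> D a \<Longrightarrow> ((i, x, True) \<in> Ty a) = (x \<in> h (fa a i))"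
    proof -
      fix a i x assume i: "i \<in> Field s" and x: "x \<in> D a"
      show "((i, x, True) \<in> Ty a) = (x \<in> h (fa a i))"
      proof
        assume "(i, x, True) \<in> Ty a" thus "x \<in> h (fa a i)" unfolding Ty_def by auto
      next
        assume xh: "x \<in> h (fa a i)"
        have "(i, x, True) = (\<lambda>(i, x). (i, x, x \<in> h (fa a i))) (i, x)" using xh by simp
        moreover have "(i, x) \<in> Field s \<times> D a" using i x by blast
        ultimately show "(i, x, True) \<in> Ty a" unfolding Ty_def by (rule image_eqI)
      qed
    qed
    have key: "\<And>a i. a \<in> \<A>' \<Longrightarrow> i \<in> Field s \<Longrightarrow> D a = D0 \<and> h (fa a i) \<inter> D0 = N i"
    proof -
      fix a i assume a: "a \<in> \<A>'" and i: "i \<in> Field s"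
      have TT: "Ty a = Ty a0" using a a0 unfolding \<A>'_def by simp
      have DD: "D a = D0" unfolding D0_def using projD[of a] projD[of a0] TT by simp
      have "\<And>x. x \<in> D0 \<Longrightarrow> (x \<in> h (fa a i)) = (x \<in> h (fa a0 i))"
        using memTy[OF i, of _ a] memTy[OF i, of _ a0] TT DD unfolding D0_def by simp
      hence "h (fa a i) \<inter> D0 = N i" unfolding N_def by blast
      thus "D a = D0 \<and> h (fa a i) \<inter> D0 = N i" using DD by blast
    qed
    have Ninj: "\<And>i j. i \<in> Field s \<Longrightarrow> j \<in> Field s \<Longrightarrow> N i = N j \<Longrightarrow> i = j"
    proof (rule ccontr)
      fix i j assume i: "i \<in> Field s" and j: "j \<in> Field s" and e: "N i = N j" and ne: "i \<noteq> j"
      have "fa a0 i \<noteq> fa a0 j" using fa_bij[OF a0A] i j ne unfolding bij_betw_def inj_on_def by blast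
      moreover have "fa a0 i \<in> a0" "fa a0 j \<in> a0" using fa_bij[OF a0A] i j unfolding bij_betw_def by blast+
      ultimately have "h (fa a0 i) \<inter> D a0 \<noteq> h (fa a0 j) \<inter> D a0" using Dsep[OF a0A] by blast
      thus False using e unfolding N_def D0_def by simp
    qed
    have D0S: "D0 \<in> SS ch L" using smallD[OF a0A] DL[OF a0A] unfolding D0_def SS_def by blast
    have NS: "\<And>i. N i \<in> SS ch L"
    proof -
      fix i have "N i \<subseteq> D0" unfolding N_def by blast
      thus "N i \<in> SS ch L" using D0S small_subset unfolding SS_def by blast
    qed
    define W where "W = (\<lambda>m. (\<lambda>(i, j). (D0, N i, N j, \<tau> i j m)) ` (Field s \<times> Field s))"
    have WP: "\<And>m. m \<in> M \<Longrightarrow> W m \<in> SS ch P"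
    proof -
      fix m assume m: "m \<in> M"
      have "W m \<subseteq> P" unfolding W_def P_def using D0S NS \<tau> m by (auto simp: Pi_iff)
      moreover have "small ch (W m)" unfolding W_def
        by (rule small_image[OF small_Times[OF chi_card smallFs smallFs]])
      ultimately show "W m \<in> SS ch P" unfolding SS_def by blast
    qed
    have TT: "|T| \<le>o |T|" by (rule ordLeq_reflexive[OF card_of_Well_order])
    have SSLT: "|SS ch L| \<le>o |T|"
      by (rule ordLeq_transitive[OF SS_bound[OF chi_card y(1) uy inj_on_id[of L] _ Linf] lam_chi_le_theta]) simp
    have P1: "|SS ch L \<times> T| \<le>o |T|"
      using card_of_Times_ordLeq_infinite_Field[of "|T|" "SS ch L" T] Tinf SSLT TT
      by (simp add: Field_card_of card_of_card_order_on)
    have P2: "|SS ch L \<times> SS ch L \<times> T| \<le>o |T|"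
      using card_of_Times_ordLeq_infinite_Field[of "|T|" "SS ch L" "SS ch L \<times> T"] Tinf SSLT P1
      by (simp add: Field_card_of card_of_card_order_on)
    have PT: "|P| \<le>o |T|" unfolding P_def
      using card_of_Times_ordLeq_infinite_Field[of "|T|" "SS ch L" "SS ch L \<times> SS ch L \<times> T"] Tinf SSLT P2
      by (simp add: Field_card_of card_of_card_order_on)
    obtain gP where gP: "inj_on gP P" "gP ` P \<subseteq> T" using card_of_ordLeq[THEN iffD2, OF PT] by blast
    have SSPT: "|SS ch P| \<le>o |T|"
      by (rule ordLeq_ordIso_trans[OF SS_bound[OF chi_card y(1) uy gP Tinf] theta_chi_eq])
    have "\<exists>e. inj_on e (SS ch P) \<and> e ` SS ch P \<subseteq> T" using card_of_ordLeq[THEN iffD2, OF SSPT] .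
    hence encP: "inj_on enc (SS ch P)" "enc ` SS ch P \<subseteq> T" unfolding enc_def using someI_ex by (metis (mono_tags, lifting))+
    define \<tau>' where "\<tau>' = (\<lambda>m. enc (W m))"
    have \<tau>'M: "\<tau>' \<in> M \<rightarrow> T" unfolding \<tau>'_def using WP encP(2) by blast
    obtain a b where ab: "a \<in> \<A>'" "b \<in> \<A>'" "set_less r a b" and ceq: "\<forall>\<alpha>\<in>a. \<forall>\<beta>\<in>b. c \<alpha> \<beta> = \<tau>' (p \<alpha> \<beta>)"
      using cw[unfolded pr1_witness_def, rule_format, OF s good' \<tau>'M] by blast
    have aA: "a \<in> \<A>" and bA: "b \<in> \<A>" using ab A'sub by blast+
    have dval: "\<And>i j. i \<in> Field s \<Longrightarrow> j \<in> Field s \<Longrightarrow> d (fa a i) (fa b j) = \<tau> i j (p (fa a i) (fa b j))"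
    proof -
      fix i j assume i: "i \<in> Field s" and j: "j \<in> Field s"
      define \<alpha> where "\<alpha> = fa a i"
      define \<beta> where "\<beta> = fa b j"
      have \<alpha>a: "\<alpha> \<in> a" and \<beta>b: "\<beta> \<in> b"
        using fa_bij[OF aA] fa_bij[OF bA] i j unfolding \<alpha>_def \<beta>_def bij_betw_def by blast+
      have "(\<alpha>, \<beta>) \<in> r \<and> \<alpha> \<noteq> \<beta>" using ab(3) \<alpha>a \<beta>b unfolding set_less_def by blast
      hence "(\<alpha>, \<beta>) \<in> pairs r" unfolding pairs_def by blast
      hence mM: "p \<alpha> \<beta> \<in> M" using p_partition by blast
      define m where "m = p \<alpha> \<beta>"
      have cab: "c \<alpha> \<beta> = enc (W m)" using ceq \<alpha>a \<beta>b unfolding \<tau>'_def m_def by blast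
      have inv: "inv_into (SS ch P) enc (c \<alpha> \<beta>) = W m"
        unfolding cab using inv_into_f_f[OF encP(1) WP[OF mM[folded m_def]]] .
      have Na: "h \<alpha> \<inter> D0 = N i" using key[OF ab(1) i] unfolding \<alpha>_def by blast
      have Nb: "h \<beta> \<inter> D0 = N j" using key[OF ab(2) j] unfolding \<beta>_def by blast
      have vT: "\<tau> i j m \<in> T" using \<tau> i j mM[folded m_def] by (auto simp: Pi_iff)
      have P: "\<And>v. (v \<in> T \<and> (\<exists>D'. (D', h \<alpha> \<inter> D', h \<beta> \<inter> D', v) \<in> W m)) = (v = \<tau> i j m)"
      proof
        fix v assume "v \<in> T \<and> (\<exists>D'. (D', h \<alpha> \<inter> D', h \<beta> \<inter> D', v) \<in> W m)"
        then obtain D' where "(D', h \<alpha> \<inter> D', h \<beta> \<inter> D', v) \<in> W m" by blast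
        then obtain i' j' where i'j': "i' \<in> Field s" "j' \<in> Field s" "D' = D0" "h \<alpha> \<inter> D' = N i'"
          "h \<beta> \<inter> D' = N j'" "v = \<tau> i' j' m"
          unfolding W_def by auto
        have "i' = i" using Ninj[OF i'j'(1) i] i'j'(3,4) Na by simp
        moreover have "j' = j" using Ninj[OF i'j'(2) j] i'j'(3,5) Nb by simp
        ultimately show "v = \<tau> i j m" using i'j'(6) by simp
      next
        fix v assume "v = \<tau> i j m"
        moreover have "(D0, h \<alpha> \<inter> D0, h \<beta> \<inter> D0, \<tau> i j m) \<in> W m"
          unfolding W_def Na Nb by (rule image_eqI[where x="(i, j)"]) (simp_all add: i j)
        ultimately show "v \<in> T \<and> (\<exists>D'. (D', h \<alpha> \<inter> D', h \<beta> \<inter> D', v) \<in> W m)" using vT by blast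
      qed
      have "d \<alpha> \<beta> = \<tau> i j m" unfolding d_def Dec_def inv P by simp
      thus "d (fa a i) (fa b j) = \<tau> i j (p (fa a i) (fa b j))" unfolding \<alpha>_def \<beta>_def m_def .
    qed
    show "\<exists>a\<in>\<A>. \<exists>b\<in>\<A>. set_less r a b \<and>
             (\<exists>f g. iso s (Restr r a) f \<and> iso s (Restr r b) g \<and>
               (\<forall>i\<in>Field s. \<forall>j\<in>Field s. d (f i) (g j) = \<tau> i j (p (f i) (g j))))"
      using aA bA ab(3) fa_iso[OF aA] fa_iso[OF bA] dval by blast
  qed
  thus ?thesis using drange unfolding pr0_def by blast
qed


end

theorem theoremB:
  fixes r :: "'k rel" and M :: "'m set" and L :: "'l set" and ch :: "'c rel" and T :: "'t set"
    and p :: "'k \<Rightarrow> 'k \<Rightarrow> 'm"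
  assumes kappa_card: "Card_order r"
    and kappa_regular: "regularCard r"
    and kappa_uncountable: "\<not> countable (Field r)"
    and mu_le: "(card_of M, r) \<in> ordLeq"
    and lambda_le: "(card_of L, r) \<in> ordLeq"
    and chi_card: "Card_order ch"
    and chi_le: "(ch, r) \<in> ordLeq"
    and theta_le: "(card_of T, r) \<in> ordLeq"
    and lam_chi_lt_kappa: "(card_of (lt_exp_set L ch), r) \<in> ordLess"
    and kappa_le_pow: "(r, card_of (Pow L)) \<in> ordLeq"
    and lam_chi_le_theta: "(card_of (lt_exp_set L ch), card_of T) \<in> ordLeq"
    and theta_chi_eq: "(card_of (lt_exp_set T ch), card_of T) \<in> ordIso"
    and p_partition: "\<forall>(\<alpha>, \<beta>)\<in>pairs r. p \<alpha> \<beta> \<in> M"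
  shows "pr1 r T ch M p \<longleftrightarrow> pr0 r T ch M p"
  using pr1_imp_pr0[OF kappa_card kappa_regular kappa_uncountable chi_card lam_chi_lt_kappa
      kappa_le_pow lam_chi_le_theta theta_chi_eq p_partition]
    pr0_imp_pr1[OF kappa_card] by blast

end
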